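(* Let $G<\operatorname{Aut}(T)$ be the group generated by the automorphisms $a,b,c$ of the $6$-ary rooted tree $T=\{1,\dots,6\}^*$ defined by the wreath recursions $a=\langle\!\langle b^{-1},1,b,c^{-1},1,c\rangle\!\rangle(13)(25)(46)$, $b=\langle\!\langle b,b^{-1},1,c,c^{-1},1\rangle\!\rangle(2356)$, $c=(123)(456)$. Then $G$ is recurrent; consequently $G$ is level-transitive.
   Context: $T$ is the tree of finite words over $X=\{1,\dots,6\}$, rooted at the empty word, each word $v$ joined to $vx$. Automorphisms act on the right. The wreath recursion $g=\langle\!\langle g_1,\dots,g_6\rangle\!\rangle\sigma$ with $g_i\in\operatorname{Aut}(T)$, $\sigma$ a permutation of $X$, means $(xv)^g=x^\sigma v^{g_x}$ for $x\in X$, $v\in X^*$; $g_x=g|_x$ is the restriction (section) of $g$ at $x$. A self-similar group $G$ is recurrent if it acts transitively on $X$ and, for some (equivalently every) $x\in X$, the map $G_x\to G$, $g\mapsto g|_x$, from the stabilizer $G_x=\{g\in G:x^g=x\}$ is onto. Level-transitive means transitive on $X^n$ for all $n$. (This $G$ is $\operatorname{IMG}(f_1)$ for $f_1(z)=\frac{2(z^2-3/4)^3}{z^2(z^2-9/8)^2}-1$.) *)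

theory Defs
  imports "HOL-Algebra.Bij" "HOL-Algebra.Generated_Groups"
begin

text \<open>Alphabet X = {1,...,6}; Li stands for the letter i.  Vertices of T are words (lists).\<close>
datatype letter = L1 | L2 | L3 | L4 | L5 | L6

datatype gen = Ga | Gb | Gc

text \<open>A section state: trivial, a generator, or the inverse of a generator.\<close>
datatype state = Id | Pos gen | Neg gen

fun sinv :: "state \<Rightarrow> state" where
  "sinv Id = Id" | "sinv (Pos g) = Neg g" | "sinv (Neg g) = Pos g"

fun sigma :: "gen \<Rightarrow> letter \<Rightarrow> letter" where
  "sigma Ga L1 = L3" | "sigma Ga L2 = L5" | "sigma Ga L3 = L1"
| "sigma Ga L4 = L6" | "sigma Ga L5 = L2" | "sigma Ga L6 = L4"
| "sigma Gb L1 = L1" | "sigma Gb L2 = L3" | "sigma Gb L3 = L5"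
| "sigma Gb L4 = L4" | "sigma Gb L5 = L6" | "sigma Gb L6 = L2"
| "sigma Gc L1 = L2" | "sigma Gc L2 = L3" | "sigma Gc L3 = L1"
| "sigma Gc L4 = L5" | "sigma Gc L5 = L6" | "sigma Gc L6 = L4"

fun sect :: "gen \<Rightarrow> letter \<Rightarrow> state" where
  "sect Ga L1 = Neg Gb" | "sect Ga L2 = Id" | "sect Ga L3 = Pos Gb"
| "sect Ga L4 = Neg Gc" | "sect Ga L5 = Id" | "sect Ga L6 = Pos Gc"
| "sect Gb L1 = Pos Gb" | "sect Gb L2 = Neg Gb" | "sect Gb L3 = Id"
| "sect Gb L4 = Pos Gc" | "sect Gb L5 = Neg Gc" | "sect Gb L6 = Id"
| "sect Gc _ = Id"

text \<open>Action of a state on words: (xv)^g = x^sigma v^(g_x); for g^-1 with y = x^(sigma^-1):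
  (xv)^(g^-1) = y v^((g_y)^-1).\<close>
fun act :: "state \<Rightarrow> letter list \<Rightarrow> letter list" where
  "act Id w = w"
| "act (Pos g) [] = []"
| "act (Pos g) (x # v) = sigma g x # act (sect g x) v"
| "act (Neg g) [] = []"
| "act (Neg g) (x # v) = (let y = Hilbert_Choice.inv (sigma g) x in y # act (sinv (sect g y)) v)"

definition autA :: "letter list \<Rightarrow> letter list" where "autA = act (Pos Ga)"
definition autB :: "letter list \<Rightarrow> letter list" where "autB = act (Pos Gb)"
definition autC :: "letter list \<Rightarrow> letter list" where "autC = act (Pos Gc)"

definition Ggrp :: "(letter list \<Rightarrow> letter list) set" where
  "Ggrp = generate (BijGroup (UNIV :: letter list set)) {autA, autB, autC}"

definition restr :: "(letter list \<Rightarrow> letter list) \<Rightarrow> letter \<Rightarrow> (letter list \<Rightarrow> letter list)" where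
  "restr g x = (\<lambda>v. tl (g (x # v)))"

definition recurrent :: "(letter list \<Rightarrow> letter list) set \<Rightarrow> bool" where
  "recurrent H \<longleftrightarrow>
     (\<forall>x y. \<exists>g\<in>H. g [x] = [y]) \<and>
     (\<exists>x. (\<lambda>g. restr g x) ` {g \<in> H. g [x] = [x]} = H)"

definition level_transitive :: "(letter list \<Rightarrow> letter list) set \<Rightarrow> bool" where
  "level_transitive H \<longleftrightarrow>
     (\<forall>n u v. length u = n \<longrightarrow> length v = n \<longrightarrow> (\<exists>g\<in>H. g u = v))"

end

theory Submission
  imports Defs
begin

abbreviation "BG \<equiv> BijGroup (UNIV :: letter list set)"

fun siginv :: "gen \<Rightarrow> letter \<Rightarrow> letter" where
  "siginv Ga L1 = L3" | "siginv Ga L2 = L5" | "siginv Ga L3 = L1"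
| "siginv Ga L4 = L6" | "siginv Ga L5 = L2" | "siginv Ga L6 = L4"
| "siginv Gb L1 = L1" | "siginv Gb L2 = L6" | "siginv Gb L3 = L2"
| "siginv Gb L4 = L4" | "siginv Gb L5 = L3" | "siginv Gb L6 = L5"
| "siginv Gc L1 = L3" | "siginv Gc L2 = L1" | "siginv Gc L3 = L2"
| "siginv Gc L4 = L6" | "siginv Gc L5 = L4" | "siginv Gc L6 = L5"

lemma sig_siginv[simp]: "sigma g (siginv g x) = x"
  by (cases g; cases x; simp)

lemma siginv_sig[simp]: "siginv g (sigma g x) = x"
  by (cases g; cases x; simp)

lemma inv_sigma[simp]: "Hilbert_Choice.inv (sigma g) = siginv g"
  by (rule inv_equality) simp_all

lemma sinv_sinv[simp]: "sinv (sinv s) = s"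
  by (cases s) simp_all

lemma act_Neg_Cons[simp]:
  "act (Neg g) (x # v) = siginv g x # act (sinv (sect g (siginv g x))) v"
  by (simp add: Let_def)

declare act.simps(5)[simp del]

lemma act_Id_fun[simp]: "act Id = (\<lambda>w. w)"
  by (rule ext) simp

lemma act_len[simp]: "length (act s w) = length w"
  by (induction w arbitrary: s) (case_tac s; simp)+

lemma act_cancel[simp]: "act s (act (sinv s) w) = w"
proof (induction w arbitrary: s)
  case Nil
  then show ?case by (cases s) simp_all
next
  case (Cons x v)
  show ?case
  proof (cases s)
    case (Pos g)
    then show ?thesis using Cons by simp
  next
    case (Neg g)
    then show ?thesis using Cons[of "sinv (sect g x)"] by simp
  qed simp
qed

lemma act_cancel2[simp]: "act (sinv s) (act s w) = w"
  using act_cancel[of "sinv s" w] by simp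

lemma act_bij: "bij (act s)"
  by (rule bij_betw_byWitness[where f'="act (sinv s)"]) auto

lemma Bij_UNIV: "f \<in> Bij UNIV \<longleftrightarrow> bij f"
  by (simp add: Bij_def extensional_def)

lemma carrier_BG: "carrier BG = Bij UNIV"
  by (simp add: BijGroup_def)

lemma mult_BG: "f \<in> Bij UNIV \<Longrightarrow> g \<in> Bij UNIV \<Longrightarrow> f \<otimes>\<^bsub>BG\<^esub> g = f \<circ> g"
  by (simp add: BijGroup_def compose_def fun_eq_iff)

lemma one_BG: "\<one>\<^bsub>BG\<^esub> = (\<lambda>w. w)"
  by (simp add: BijGroup_def fun_eq_iff)

lemma act_carrier: "act s \<in> carrier BG"
  by (simp add: carrier_BG Bij_UNIV act_bij)

lemma gens_carrier: "{autA, autB, autC} \<subseteq> carrier BG"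
  by (simp add: autA_def autB_def autC_def act_carrier)

lemma sub: "subgroup Ggrp BG"
  unfolding Ggrp_def
  by (rule group.generate_is_subgroup[OF group_BijGroup gens_carrier])

lemma G_carrier: "g \<in> Ggrp \<Longrightarrow> g \<in> Bij UNIV"
  using subgroup.subset[OF sub] carrier_BG by auto

lemma inv_act: "inv\<^bsub>BG\<^esub> (act (Pos g)) = act (Neg g)"
proof (rule group.inv_equality[OF group_BijGroup])
  show "act (Neg g) \<otimes>\<^bsub>BG\<^esub> act (Pos g) = \<one>\<^bsub>BG\<^esub>"
    using act_carrier[of "Pos g"] act_carrier[of "Neg g"] act_cancel2[of "Pos g"]
    by (simp add: mult_BG carrier_BG one_BG fun_eq_iff del: act_cancel2)
qed (simp_all add: act_carrier)

lemma act_in_G: "act s \<in> Ggrp"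
proof (cases s)
  case Id
  then show ?thesis using subgroup.one_closed[OF sub] by (simp add: one_BG)
next
  case (Pos g)
  then show ?thesis unfolding Ggrp_def
    by (cases g) (auto intro: generate.incl simp: autA_def autB_def autC_def)
next
  case (Neg g)
  have "inv\<^bsub>BG\<^esub> (act (Pos g)) \<in> Ggrp" unfolding Ggrp_def
    by (cases g) (auto intro!: generate.inv simp: autA_def autB_def autC_def)
  then show ?thesis using Neg inv_act by simp
qed

lemma comp_in_G: "f \<in> Ggrp \<Longrightarrow> g \<in> Ggrp \<Longrightarrow> f \<circ> g \<in> Ggrp"
  using subgroup.m_closed[OF sub, of f g] by (simp add: mult_BG G_carrier)

lemma G_ind:
  assumes "g \<in> Ggrp" "\<And>s. P (act s)"
    "\<And>f h. f \<in> Ggrp \<Longrightarrow> h \<in> Ggrp \<Longrightarrow> P f \<Longrightarrow> P h \<Longrightarrow> P (f \<circ> h)"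
  shows "P g"
  using assms(1) unfolding Ggrp_def
proof (induction rule: generate.induct)
  case one
  then show ?case using assms(2)[of Id] by (simp add: one_BG)
next
  case (incl h)
  then show ?case using assms(2) by (auto simp: autA_def autB_def autC_def)
next
  case (inv h)
  then show ?case using assms(2) inv_act by (auto simp: autA_def autB_def autC_def)
next
  case (eng h1 h2)
  then show ?case using assms(3)[of h1 h2] G_carrier[of h1] G_carrier[of h2]
    by (simp add: mult_BG Ggrp_def comp_def)
qed

definition TP :: "(letter list \<Rightarrow> letter list) \<Rightarrow> bool" where
  "TP g \<longleftrightarrow> (\<forall>w. length (g w) = length w) \<and> (\<forall>x v. hd (g (x # v)) = hd (g [x]))"

lemma TP_act: "TP (act s)"
  unfolding TP_def by (cases s) auto

lemma TP_single: "TP g \<Longrightarrow> g [x] = [hd (g [x])]"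
  unfolding TP_def by (metis One_nat_def length_0_conv length_Suc_conv list.sel(1) list.size(4) add_0)

lemma TP_split: "TP g \<Longrightarrow> g (x # v) = hd (g [x]) # restr g x v"
  unfolding TP_def restr_def
  by (metis length_Suc_conv list.collapse list.distinct(1) list.size(4) Suc_eq_plus1)

lemma TP_comp: "TP f \<Longrightarrow> TP g \<Longrightarrow> TP (f \<circ> g)"
proof -
  assume f: "TP f" and g: "TP g"
  have "hd (f (g (x # v))) = hd (f (g [x]))" for x v
  proof -
    have "g (x # v) = hd (g [x]) # restr g x v" using TP_split[OF g] .
    moreover have "g [x] = hd (g [x]) # []" using TP_single[OF g] by simp
    ultimately show ?thesis using TP_split[OF f, of "hd (g [x])"] by simp
  qed
  then show ?thesis using f g unfolding TP_def by simp
qed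

lemma restr_comp: "TP f \<Longrightarrow> TP g \<Longrightarrow> restr (f \<circ> g) x = restr f (hd (g [x])) \<circ> restr g x"
  unfolding fun_eq_iff
  by (metis TP_split comp_apply list.sel(3) restr_def)

lemma restr_act: "restr (act s) x \<in> Ggrp"
proof (cases s)
  case Id
  then show ?thesis using act_in_G[of Id] by (simp add: restr_def)
next
  case (Pos g)
  have "restr (act s) x = act (sect g x)" using Pos by (simp add: restr_def fun_eq_iff)
  then show ?thesis by (simp add: act_in_G)
next
  case (Neg g)
  have "restr (act s) x = act (sinv (sect g (siginv g x)))" using Neg by (simp add: restr_def fun_eq_iff)
  then show ?thesis by (simp add: act_in_G)
qed

lemma G_main: "g \<in> Ggrp \<Longrightarrow> TP g \<and> (\<forall>x. restr g x \<in> Ggrp)"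
proof (erule G_ind)
  fix s show "TP (act s) \<and> (\<forall>x. restr (act s) x \<in> Ggrp)" by (simp add: TP_act restr_act)
next
  fix f h assume "f \<in> Ggrp" "h \<in> Ggrp" and f: "TP f \<and> (\<forall>x. restr f x \<in> Ggrp)"
    and h: "TP h \<and> (\<forall>x. restr h x \<in> Ggrp)"
  then show "TP (f \<circ> h) \<and> (\<forall>x. restr (f \<circ> h) x \<in> Ggrp)"
    using TP_comp restr_comp comp_in_G by metis
qed


abbreviation "pa \<equiv> act (Pos Ga)"
abbreviation "pb \<equiv> act (Pos Gb)"
abbreviation "pc \<equiv> act (Pos Gc)"
abbreviation "na \<equiv> act (Neg Ga)"
abbreviation "nb \<equiv> act (Neg Gb)"
abbreviation "nc \<equiv> act (Neg Gc)"

lemma a_eq: "pa = nc \<circ> nb"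
proof (rule ext)
  fix w show "pa w = (nc \<circ> nb) w"
    by (cases w; simp; case_tac a; simp)
qed

lemma ainv_eq: "na = pb \<circ> pc"
proof (rule ext)
  fix w show "na w = (pb \<circ> pc) w"
    by (cases w; simp; case_tac a; simp)
qed

definition "tt = pc \<circ> pc \<circ> pa \<circ> pc"
definition "ti = nc \<circ> na \<circ> nc \<circ> nc"

lemma tt_G: "tt \<in> Ggrp" unfolding tt_def by (intro comp_in_G act_in_G)
lemma ti_G: "ti \<in> Ggrp" unfolding ti_def by (intro comp_in_G act_in_G)

lemma lift_gen: "\<exists>k\<in>Ggrp. k [L1] = [L1] \<and> restr k L1 = act s"
proof -
  have kc: "ti \<circ> pb \<circ> tt \<in> Ggrp \<and> (ti \<circ> pb \<circ> tt) [L1] = [L1] \<and> restr (ti \<circ> pb \<circ> tt) L1 = pc"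
    using tt_G ti_G act_in_G comp_in_G
    by (simp add: tt_def ti_def restr_def fun_eq_iff)
  have kC: "ti \<circ> nb \<circ> tt \<in> Ggrp \<and> (ti \<circ> nb \<circ> tt) [L1] = [L1] \<and> restr (ti \<circ> nb \<circ> tt) L1 = nc"
    using tt_G ti_G act_in_G comp_in_G
    by (simp add: tt_def ti_def restr_def fun_eq_iff)
  show ?thesis
  proof (cases s)
    case Id
    then show ?thesis using act_in_G[of Id] by (intro bexI[of _ "act Id"]) (auto simp: restr_def)
  next
    case (Pos g)
    then show ?thesis
    proof (cases g)
      case Ga
      have "ti \<circ> nb \<circ> tt \<circ> nb \<in> Ggrp" using kC act_in_G comp_in_G by blast
      moreover have "(ti \<circ> nb \<circ> tt \<circ> nb) [L1] = [L1]" using kC by simp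
      moreover have "restr (ti \<circ> nb \<circ> tt \<circ> nb) L1 = pa"
        using kC unfolding a_eq by (simp add: restr_def fun_eq_iff)
      ultimately show ?thesis using Pos Ga by blast
    next
      case Gb
      then show ?thesis using Pos act_in_G[of "Pos Gb"]
        by (intro bexI[of _ pb]) (auto simp: restr_def fun_eq_iff)
    next
      case Gc
      then show ?thesis using Pos kc by blast
    qed
  next
    case (Neg g)
    then show ?thesis
    proof (cases g)
      case Ga
      have "pb \<circ> (ti \<circ> pb \<circ> tt) \<in> Ggrp" using kc act_in_G comp_in_G by blast
      moreover have "(pb \<circ> (ti \<circ> pb \<circ> tt)) [L1] = [L1]" using kc by simp
      moreover have "restr (pb \<circ> (ti \<circ> pb \<circ> tt)) L1 = na"
        unfolding ainv_eq by (simp add: restr_def fun_eq_iff tt_def ti_def)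
      ultimately show ?thesis using Neg Ga by blast
    next
      case Gb
      then show ?thesis using Neg act_in_G[of "Neg Gb"]
        by (intro bexI[of _ nb]) (auto simp: restr_def fun_eq_iff)
    next
      case Gc
      then show ?thesis using Neg kC by blast
    qed
  qed
qed


lemma lift: "g \<in> Ggrp \<Longrightarrow> \<exists>k\<in>Ggrp. k [L1] = [L1] \<and> restr k L1 = g"
proof (erule G_ind)
  fix s show "\<exists>k\<in>Ggrp. k [L1] = [L1] \<and> restr k L1 = act s" by (rule lift_gen)
next
  fix f h assume "f \<in> Ggrp" "h \<in> Ggrp" and f: "\<exists>k\<in>Ggrp. k [L1] = [L1] \<and> restr k L1 = f"
    and h: "\<exists>k\<in>Ggrp. k [L1] = [L1] \<and> restr k L1 = h"
  then obtain k1 k2 where k1: "k1 \<in> Ggrp" "k1 [L1] = [L1]" "restr k1 L1 = f"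
    and k2: "k2 \<in> Ggrp" "k2 [L1] = [L1]" "restr k2 L1 = h" by blast
  have "restr (k1 \<circ> k2) L1 = f \<circ> h"
    using restr_comp[of k1 k2 L1] G_main k1 k2 by simp
  moreover have "(k1 \<circ> k2) [L1] = [L1]" using k1 k2 by simp
  ultimately show "\<exists>k\<in>Ggrp. k [L1] = [L1] \<and> restr k L1 = f \<circ> h"
    using comp_in_G[OF k1(1) k2(1)] by blast
qed

lemma id_G: "(\<lambda>w. w) \<in> Ggrp"
  using act_in_G[of Id] unfolding act_Id_fun .

lemma from1: "\<exists>g\<in>Ggrp. g [L1] = [y]"
proof (cases y)
  case L1 show ?thesis by (intro bexI[of _ "act Id"]) (simp_all add: L1 id_G)
next
  case L2 show ?thesis by (intro bexI[of _ pc]) (simp_all add: L2 act_in_G[of "Pos Gc"])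
next
  case L3 show ?thesis by (intro bexI[of _ "pc \<circ> pc"]) (simp add: L3, intro comp_in_G act_in_G)
next
  case L5 show ?thesis by (intro bexI[of _ "pa \<circ> pc"]) (simp add: L5, intro comp_in_G act_in_G)
next
  case L6 show ?thesis by (intro bexI[of _ "pc \<circ> pa \<circ> pc"]) (simp add: L6, intro comp_in_G act_in_G)
next
  case L4 show ?thesis by (intro bexI[of _ "pc \<circ> pc \<circ> pa \<circ> pc"]) (simp add: L4, intro comp_in_G act_in_G)
qed

lemma to1: "\<exists>g\<in>Ggrp. g [x] = [L1]"
proof (cases x)
  case L1 show ?thesis by (intro bexI[of _ "act Id"]) (simp_all add: L1 id_G)
next
  case L2 show ?thesis by (intro bexI[of _ nc]) (simp_all add: L2 act_in_G[of "Neg Gc"])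
next
  case L3 show ?thesis by (intro bexI[of _ pa]) (simp_all add: L3 act_in_G[of "Pos Ga"])
next
  case L5 show ?thesis by (intro bexI[of _ "nc \<circ> pa"]) (simp add: L5, intro comp_in_G act_in_G)
next
  case L4 show ?thesis by (intro bexI[of _ "nc \<circ> pa \<circ> pc"]) (simp add: L4, intro comp_in_G act_in_G)
next
  case L6 show ?thesis by (intro bexI[of _ "nc \<circ> pa \<circ> pc \<circ> pa"]) (simp add: L6, intro comp_in_G act_in_G)
qed

lemma trans1: "\<exists>g\<in>Ggrp. g [x] = [y]"
proof -
  obtain h where h: "h \<in> Ggrp" "h [x] = [L1]" using to1 by blast
  obtain g where g: "g \<in> Ggrp" "g [L1] = [y]" using from1 by blast
  show ?thesis using h g comp_in_G[OF g(1) h(1)] by (intro bexI[of _ "g \<circ> h"]) simp_all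
qed

lemma G_surj: "g \<in> Ggrp \<Longrightarrow> \<exists>z. g z = w"
  proof -
  assume "g \<in> Ggrp"
  then have "surj g" using G_carrier[of g] by (simp add: Bij_UNIV bij_def)
  then show ?thesis by (metis surjD)
qed

lemma levtrans: "\<forall>u v. length u = n \<longrightarrow> length v = n \<longrightarrow> (\<exists>g\<in>Ggrp. g u = v)"
proof (induction n)
  case 0
  then show ?case using act_in_G[of Id] by (intro allI impI bexI[of _ "act Id"]) simp_all
next
  case (Suc n)
  show ?case
  proof (intro allI impI)
    fix u v :: "letter list" assume u: "length u = Suc n" and v: "length v = Suc n"
    then obtain x u' y v' where uu: "u = x # u'" and vv: "v = y # v'"
      by (metis length_Suc_conv)
    obtain h1 where h1: "h1 \<in> Ggrp" "h1 [x] = [L1]" using to1 by blast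
    obtain g where g: "g \<in> Ggrp" "g [L1] = [y]" using from1 by blast
    have TPh1: "TP h1" and TPg: "TP g" using G_main[OF h1(1)] G_main[OF g(1)] by simp_all
    have rG: "restr g L1 \<in> Ggrp" using G_main[OF g(1)] by simp
    then obtain z where z: "restr g L1 z = v'" using G_surj by blast
    have lz: "length z = n"
      using z v vv G_main[OF rG] unfolding TP_def by auto
    have h1u: "h1 u = L1 # restr h1 x u'" using TP_split[OF TPh1, of x u'] h1 uu by simp
    have lw: "length (restr h1 x u') = n"
      using TPh1 u uu h1u unfolding TP_def by (metis length_Cons old.nat.inject)
    obtain g0 where g0: "g0 \<in> Ggrp" "g0 (restr h1 x u') = z" using Suc.IH lw lz by blast
    obtain k where k: "k \<in> Ggrp" "k [L1] = [L1]" "restr k L1 = g0" using lift[OF g0(1)] by blast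
    have TPk: "TP k" using G_main[OF k(1)] by simp
    have "k (h1 u) = L1 # z" using TP_split[OF TPk, of L1] k g0 h1u by simp
    then have "g (k (h1 u)) = v" using TP_split[OF TPg, of L1 z] g z vv by simp
    moreover have "g \<circ> k \<circ> h1 \<in> Ggrp" using g k h1 comp_in_G by blast
    ultimately show "\<exists>g\<in>Ggrp. g u = v" by (intro bexI[of _ "g \<circ> k \<circ> h1"]) simp_all
  qed
qed

theorem lemma11p5:
  shows "recurrent Ggrp \<and> level_transitive Ggrp"
proof
  have "(\<lambda>g. restr g L1) ` {g \<in> Ggrp. g [L1] = [L1]} = Ggrp"
  proof
    show "(\<lambda>g. restr g L1) ` {g \<in> Ggrp. g [L1] = [L1]} \<subseteq> Ggrp" using G_main by blast
    show "Ggrp \<subseteq> (\<lambda>g. restr g L1) ` {g \<in> Ggrp. g [L1] = [L1]}"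
    proof
      fix g assume "g \<in> Ggrp"
      then obtain k where "k \<in> Ggrp" "k [L1] = [L1]" "restr k L1 = g" using lift by blast
      then show "g \<in> (\<lambda>g. restr g L1) ` {g \<in> Ggrp. g [L1] = [L1]}" by force
    qed
  qed
  then show "recurrent Ggrp" unfolding recurrent_def using trans1 by blast
  show "level_transitive Ggrp" unfolding level_transitive_def using levtrans by blast
qed

end
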